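(* Every topological manifold $X$ of positive dimension admits infinitely many pairwise nonisomorphic nontrivial topological quandle structures.
   Context: A topological quandle structure on a topological space $X$ is a continuous map $f:X\times X\to X$ such that for every $y\in X$ the map $R_y:X\to X$, $x\mapsto f(x,y)$, is a homeomorphism, $f(f(x,y),z)=f(f(x,z),f(y,z))$ for all $x,y,z\in X$, and $f(x,x)=x$ for all $x\in X$. The structure is trivial if $f(x,y)=x$ for all $x,y$, and nontrivial otherwise. Two such structures $f_1,f_2$ on $X$ are isomorphic if there is a homeomorphism $\varphi:X\to X$ with $\varphi(f_1(x,y))=f_2(\varphi(x),\varphi(y))$ for all $x,y\in X$. *)

theory Defs
  imports "HOL-Analysis.Analysis"
begin

definition topological_manifold :: "'a topology \<Rightarrow> nat \<Rightarrow> bool" where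
  "topological_manifold X n \<longleftrightarrow>
     Hausdorff_space X \<and> second_countable X \<and>
     (\<forall>x\<in>topspace X. \<exists>U V. openin X U \<and> x \<in> U \<and> openin (Euclidean_space n) V \<and>
        (subtopology X U) homeomorphic_space (subtopology (Euclidean_space n) V))"

definition topological_quandle :: "'a topology \<Rightarrow> ('a \<Rightarrow> 'a \<Rightarrow> 'a) \<Rightarrow> bool" where
  "topological_quandle X f \<longleftrightarrow>
     continuous_map (prod_topology X X) X (\<lambda>(x, y). f x y) \<and>
     (\<forall>y\<in>topspace X. homeomorphic_map X X (\<lambda>x. f x y)) \<and>
     (\<forall>x\<in>topspace X. \<forall>y\<in>topspace X. \<forall>z\<in>topspace X. f (f x y) z = f (f x z) (f y z)) \<and>
     (\<forall>x\<in>topspace X. f x x = x)"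

definition trivial_quandle :: "'a topology \<Rightarrow> ('a \<Rightarrow> 'a \<Rightarrow> 'a) \<Rightarrow> bool" where
  "trivial_quandle X f \<longleftrightarrow> (\<forall>x\<in>topspace X. \<forall>y\<in>topspace X. f x y = x)"

definition quandle_isomorphic :: "'a topology \<Rightarrow> ('a \<Rightarrow> 'a \<Rightarrow> 'a) \<Rightarrow> ('a \<Rightarrow> 'a \<Rightarrow> 'a) \<Rightarrow> bool" where
  "quandle_isomorphic X f1 f2 \<longleftrightarrow>
     (\<exists>\<phi>. homeomorphic_map X X \<phi> \<and>
        (\<forall>x\<in>topspace X. \<forall>y\<in>topspace X. \<phi> (f1 x y) = f2 (\<phi> x) (\<phi> y)))"

end

theory Submission
  imports Defs "HOL-Analysis.Analysis"
begin


definition clip :: "real \<Rightarrow> real" where "clip t = max (-1/2) (min (1/2) t)"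
definition cl1 :: "real \<Rightarrow> real" where "cl1 u = max (-1) (min 1 u)"
definition Dm :: "real \<Rightarrow> real \<Rightarrow> real" where
  "Dm t u = clip t * max 0 (1 - u^2) / (1 + cl1 u * clip t)"
definition rho :: "real \<Rightarrow> real \<Rightarrow> real" where "rho s u = (u + s) / (1 + u * s)"

lemma clip_bd: "\<bar>clip t\<bar> \<le> 1/2" unfolding clip_def by auto
lemma clip_neg: "clip (-t) = - clip t" unfolding clip_def by auto
lemma clip_id: "\<bar>t\<bar> \<le> 1/2 \<Longrightarrow> clip t = t" unfolding clip_def by auto

lemma den_pos: "\<bar>u::real\<bar> \<le> 1 \<Longrightarrow> \<bar>s\<bar> \<le> 1/2 \<Longrightarrow> 1 + u * s \<ge> 1/2"
proof -
  assume a: "\<bar>u\<bar> \<le> 1" "\<bar>s\<bar> \<le> 1/2"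
  have "\<bar>u * s\<bar> \<le> 1 * (1/2)" unfolding abs_mult using a by (intro mult_mono) auto
  then show ?thesis by auto
qed

lemma Dm_out: "\<bar>u\<bar> \<ge> 1 \<Longrightarrow> Dm t u = 0"
proof -
  assume "\<bar>u\<bar> \<ge> 1"
  then have "u^2 \<ge> 1" by (metis abs_le_square_iff abs_one power_one)
  then show ?thesis unfolding Dm_def by simp
qed

lemma Dm_in: "\<bar>u\<bar> \<le> 1 \<Longrightarrow> u + Dm t u = rho (clip t) u"
proof -
  assume a: "\<bar>u\<bar> \<le> 1"
  then have "u^2 \<le> 1" by (metis abs_le_square_iff abs_one power_one)
  moreover have "cl1 u = u" using a unfolding cl1_def by auto
  moreover have "1 + u * clip t > 0" using den_pos[OF a clip_bd[of t]] by linarith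
  ultimately show ?thesis unfolding Dm_def rho_def
    by (simp add: field_simps power2_eq_square)
qed

lemma Dm_zero: "Dm 0 u = 0" unfolding Dm_def clip_def by simp

lemma rho_bd: "\<bar>u\<bar> < 1 \<Longrightarrow> \<bar>s\<bar> \<le> 1/2 \<Longrightarrow> \<bar>rho s u\<bar> < 1"
proof -
  assume a: "\<bar>u\<bar> < 1" "\<bar>s\<bar> \<le> 1/2"
  have d: "1 + u * s > 0" using den_pos[of u s] a by auto
  have p1: "(1 - u) * (1 - s) > 0" using a by (intro mult_pos_pos) auto
  have p2: "(1 + u) * (1 + s) > 0" using a by (intro mult_pos_pos) auto
  have l1: "u + s < 1 + u * s" using p1 by (simp add: algebra_simps)
  have l2: "- (1 + u * s) < u + s" using p2 by (simp add: algebra_simps)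
  have "(u + s) / (1 + u * s) < 1" using l1 d by (simp add: divide_less_eq)
  moreover have "-1 < (u + s) / (1 + u * s)" using l2 d by (simp add: less_divide_eq)
  ultimately show ?thesis unfolding rho_def abs_less_iff by linarith
qed

lemma rho_comp: "1 + u * t \<noteq> 0 \<Longrightarrow> rho s (rho t u) = (u + s + t + u * s * t) / (1 + u * s + u * t + s * t)"
proof -
  assume d: "1 + u * t \<noteq> 0"
  have e1: "(u + t) / (1 + u * t) + s = (u + s + t + u * s * t) / (1 + u * t)"
    using d by (simp add: field_simps)
  have e2: "1 + (u + t) / (1 + u * t) * s = (1 + u * s + u * t + s * t) / (1 + u * t)"
    using d by (simp add: field_simps)
  show ?thesis unfolding rho_def e1 e2 using d by simp
qed

lemma rho_inv: "\<bar>u\<bar> \<le> 1 \<Longrightarrow> \<bar>s\<bar> \<le> 1/2 \<Longrightarrow> rho (-s) (rho s u) = u"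
proof -
  assume a: "\<bar>u\<bar> \<le> 1" "\<bar>s\<bar> \<le> 1/2"
  have d: "1 + u * s > 0" using den_pos[of u s] a by auto
  have s2: "s^2 < 1" using a by (subst abs_square_less_1) simp
  have "rho (-s) (rho s u) = (u + - s + s + u * - s * s) / (1 + u * - s + u * s + - s * s)"
    using d by (simp add: rho_comp)
  also have "\<dots> = u * (1 - s^2) / (1 - s^2)" by (simp add: algebra_simps power2_eq_square)
  also have "\<dots> = u" using s2 by simp
  finally show ?thesis .
qed

lemma rho_comm: "\<bar>u\<bar> \<le> 1 \<Longrightarrow> \<bar>s\<bar> \<le> 1/2 \<Longrightarrow> \<bar>t\<bar> \<le> 1/2 \<Longrightarrow> rho s (rho t u) = rho t (rho s u)"
proof -
  assume a: "\<bar>u\<bar> \<le> 1" "\<bar>s\<bar> \<le> 1/2" "\<bar>t\<bar> \<le> 1/2"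
  have d1: "1 + u * s > 0" using den_pos[of u s] a by auto
  have d2: "1 + u * t > 0" using den_pos[of u t] a by auto
  have "rho s (rho t u) = (u + s + t + u * s * t) / (1 + u * s + u * t + s * t)"
    using d2 by (simp add: rho_comp)
  also have "\<dots> = (u + t + s + u * t * s) / (1 + u * t + u * s + t * s)"
    by (simp add: ac_simps)
  also have "\<dots> = rho t (rho s u)"
    using d1 by (simp add: rho_comp)
  finally show ?thesis .
qed

lemma rho_fix: "\<bar>u\<bar> < 1 \<Longrightarrow> \<bar>s\<bar> \<le> 1/2 \<Longrightarrow> rho s u = u \<longleftrightarrow> s = 0"
proof -
  assume a: "\<bar>u\<bar> < 1" "\<bar>s\<bar> \<le> 1/2"
  have d: "1 + u * s > 0" using den_pos[of u s] a by auto
  have u2: "1 - u^2 > 0" using a by (simp add: abs_square_less_1)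
  have "rho s u = u \<longleftrightarrow> u + s = u * (1 + u * s)" unfolding rho_def using d by (simp add: field_simps)
  also have "\<dots> \<longleftrightarrow> s * (1 - u^2) = 0" by (simp add: algebra_simps power2_eq_square)
  also have "\<dots> \<longleftrightarrow> s = 0" using u2 by simp
  finally show ?thesis .
qed

lemma rho_zero: "rho 0 u = u" unfolding rho_def by simp

lemma cont_Dm [continuous_intros]:
  assumes "continuous_map Z euclideanreal a" "continuous_map Z euclideanreal b"
  shows "continuous_map Z euclideanreal (\<lambda>z. Dm (a z) (b z))"
proof -
  have c1: "\<bar>cl1 x\<bar> \<le> 1" for x unfolding cl1_def by auto
  have "1 + cl1 (b z) * clip (a z) \<noteq> 0" for z
    using den_pos[OF c1[of "b z"] clip_bd[of "a z"]] by linarith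
  then have nz: "1 + max (- 1) (min 1 (b z)) * max (-1/2) (min (1/2) (a z)) \<noteq> 0" for z
    unfolding cl1_def clip_def .
  show ?thesis unfolding Dm_def clip_def cl1_def
    by (intro continuous_intros assms) (rule nz)
qed



definition tent :: "nat \<Rightarrow> real \<Rightarrow> real" where "tent j a = max 0 (1/2 - \<bar>a - real j\<bar>)"
definition gam :: "nat \<Rightarrow> (nat \<Rightarrow> real) \<Rightarrow> real" where
  "gam n v = (\<Prod>i\<in>{1..<n}. max 0 (1 - \<bar>v i\<bar>))"
definition Ssum :: "nat \<Rightarrow> nat \<Rightarrow> real \<Rightarrow> real \<Rightarrow> (nat \<Rightarrow> real) \<Rightarrow> real" where
  "Ssum n k e a v = (\<Sum>j\<in>{1..k}. Dm (e * tent j a * gam n v) (v 0 - 2 * real j))"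
definition Psi :: "nat \<Rightarrow> nat \<Rightarrow> real \<Rightarrow> real \<Rightarrow> (nat \<Rightarrow> real) \<Rightarrow> (nat \<Rightarrow> real)" where
  "Psi n k e a v = v(0 := v 0 + Ssum n k e a v)"
definition pc :: "nat \<Rightarrow> nat \<Rightarrow> (nat \<Rightarrow> real) \<Rightarrow> real" where
  "pc n k v = real k * max 0 (1 - \<bar>v 0 + 2\<bar>) * gam n v"

lemma tent_bd: "0 \<le> tent j a" "tent j a \<le> 1/2" unfolding tent_def by (auto simp: max_def)
lemma gam_bd: "0 \<le> gam n v" "gam n v \<le> 1" unfolding gam_def
  by (auto intro: prod_nonneg prod_le_1)
lemma tg_bd: "\<bar>e\<bar> \<le> 1 \<Longrightarrow> \<bar>e * tent j a * gam n v\<bar> \<le> 1/2"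
proof -
  assume "\<bar>e\<bar> \<le> 1"
  then have "\<bar>e\<bar> * \<bar>tent j a\<bar> * \<bar>gam n v\<bar> \<le> 1 * (1/2) * 1"
    using tent_bd gam_bd by (intro mult_mono) auto
  then show ?thesis by (simp add: abs_mult)
qed

lemma gam_upd0: "gam n (v(0 := z)) = gam n v" unfolding gam_def
  by (intro prod.cong) auto

lemma gam_zero_if: "i \<in> {1..<n} \<Longrightarrow> \<bar>v i\<bar> \<ge> 1 \<Longrightarrow> gam n v = 0"
  unfolding gam_def by (rule prod_zero) (auto intro!: bexI[of _ i])

lemma Ssum_in:
  assumes j: "j \<in> {1..k}" and u: "\<bar>v 0 - 2 * real j\<bar> < 1"
  shows "Ssum n k e a v = Dm (e * tent j a * gam n v) (v 0 - 2 * real j)"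
proof -
  have "Ssum n k e a v = Dm (e * tent j a * gam n v) (v 0 - 2 * real j)
      + (\<Sum>i\<in>{1..k} - {j}. Dm (e * tent i a * gam n v) (v 0 - 2 * real i))"
    unfolding Ssum_def using j by (simp add: sum.remove)
  also have "(\<Sum>i\<in>{1..k} - {j}. Dm (e * tent i a * gam n v) (v 0 - 2 * real i)) = 0"
  proof (intro sum.neutral ballI)
    fix i assume i: "i \<in> {1..k} - {j}"
    then have "\<bar>real i - real j\<bar> \<ge> 1" by auto
    then have "\<bar>v 0 - 2 * real i\<bar> \<ge> 1" using u by linarith
    then show "Dm (e * tent i a * gam n v) (v 0 - 2 * real i) = 0" by (rule Dm_out)
  qed
  finally show ?thesis by simp
qed

lemma Ssum_out:
  assumes "\<forall>j\<in>{1..k}. \<bar>v 0 - 2 * real j\<bar> \<ge> 1"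
  shows "Ssum n k e a v = 0"
  unfolding Ssum_def using assms by (intro sum.neutral ballI) (simp add: Dm_out)

lemma Psi_in:
  assumes j: "j \<in> {1..k}" and u: "\<bar>v 0 - 2 * real j\<bar> < 1"
  shows "Psi n k e a v = v(0 := 2 * real j + rho (clip (e * tent j a * gam n v)) (v 0 - 2 * real j))"
proof -
  have "v 0 + Ssum n k e a v = 2 * real j + ((v 0 - 2 * real j) + Dm (e * tent j a * gam n v) (v 0 - 2 * real j))"
    using Ssum_in[where v=v, OF j u] by simp
  also have "\<dots> = 2 * real j + rho (clip (e * tent j a * gam n v)) (v 0 - 2 * real j)"
    using u by (subst Dm_in) auto
  finally show ?thesis unfolding Psi_def by simp
qed

lemma Psi_out:
  assumes "\<forall>j\<in>{1..k}. \<bar>v 0 - 2 * real j\<bar> \<ge> 1"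
  shows "Psi n k e a v = v"
  unfolding Psi_def using Ssum_out[where v=v, OF assms] by simp

lemma Psi_cases:
  obtains j where "j \<in> {1..k}" "\<bar>v 0 - 2 * real j\<bar> < 1"
  | "\<forall>j\<in>{1..k}. \<bar>v 0 - 2 * real j\<bar> \<ge> 1"
  by (meson not_le)

lemma Psi_other: "i \<noteq> 0 \<Longrightarrow> Psi n k e a v i = v i"
  unfolding Psi_def by simp

lemma gam_Psi: "gam n (Psi n k e a v) = gam n v"
  unfolding Psi_def by (rule gam_upd0)

lemma Psi_stay:
  assumes j: "j \<in> {1..k}" and u: "\<bar>v 0 - 2 * real j\<bar> < 1"
  shows "\<bar>Psi n k e a v 0 - 2 * real j\<bar> < 1"
  using Psi_in[where v=v and n=n and e=e and a=a, OF j u] rho_bd[OF u clip_bd] by simp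

lemma Psi_comm: "Psi n k e a (Psi n k e' b v) = Psi n k e' b (Psi n k e a v)"
proof (cases rule: Psi_cases[where v=v and k=k])
  case (1 j)
  let ?u = "v 0 - 2 * real j"
  have s1: "\<bar>Psi n k e' b v 0 - 2 * real j\<bar> < 1" by (rule Psi_stay[where v=v, OF 1])
  have s2: "\<bar>Psi n k e a v 0 - 2 * real j\<bar> < 1" by (rule Psi_stay[where v=v, OF 1])
  have "Psi n k e a (Psi n k e' b v) = v(0 := 2 * real j + rho (clip (e * tent j a * gam n v))
          (rho (clip (e' * tent j b * gam n v)) ?u))"
    using Psi_in[where v="Psi n k e' b v" and e=e and a=a, OF 1(1) s1] Psi_in[where v=v and n=n and e=e' and a=b, OF 1] by (simp add: gam_upd0)
  also have "\<dots> = v(0 := 2 * real j + rho (clip (e' * tent j b * gam n v))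
          (rho (clip (e * tent j a * gam n v)) ?u))"
    using 1 by (subst rho_comm) (auto simp: clip_bd[simplified])
  also have "\<dots> = Psi n k e' b (Psi n k e a v)"
    using Psi_in[where v="Psi n k e a v" and e=e' and a=b, OF 1(1) s2] Psi_in[where v=v and n=n and e=e and a=a, OF 1] by (simp add: gam_upd0)
  finally show ?thesis .
next
  case 2
  then show ?thesis by (simp add: Psi_out)
qed

lemma Psi_inv: "Psi n k (- e) a (Psi n k e a v) = v"
proof (cases rule: Psi_cases[where v=v and k=k])
  case (1 j)
  have s1: "\<bar>Psi n k e a v 0 - 2 * real j\<bar> < 1" by (rule Psi_stay[where v=v, OF 1])
  have "Psi n k (- e) a (Psi n k e a v) = v(0 := 2 * real j + rho (- clip (e * tent j a * gam n v))
          (rho (clip (e * tent j a * gam n v)) (v 0 - 2 * real j)))"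
    using Psi_in[where v="Psi n k e a v" and e="-e" and a=a, OF 1(1) s1] Psi_in[where v=v and n=n and e=e and a=a, OF 1]
    by (simp add: gam_upd0 clip_neg[symmetric])
  also have "\<dots> = v"
    using 1 by (subst rho_inv) (auto simp: clip_bd[simplified])
  finally show ?thesis .
next
  case 2
  then show ?thesis by (simp add: Psi_out)
qed

lemma tent_zero: "j \<ge> 1 \<Longrightarrow> tent j 0 = 0" unfolding tent_def by auto

lemma Psi_zero: "Psi n k e 0 v = v"
  unfolding Psi_def Ssum_def by (simp add: tent_zero Dm_zero)

lemma pc_Psi: "pc n k (Psi n k e a v) = pc n k v"
proof (cases rule: Psi_cases[where v=v and k=k])
  case (1 j)
  have s1: "\<bar>Psi n k e a v 0 - 2 * real j\<bar> < 1" by (rule Psi_stay[where v=v, OF 1])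
  have "j \<ge> 1" using 1 by auto
  then have "pc n k (Psi n k e a v) = 0" "pc n k v = 0"
    using s1 1 unfolding pc_def by auto
  then show ?thesis by simp
next
  case 2
  then show ?thesis by (simp add: Psi_out)
qed

lemma Psi_idem: "Psi n k e (pc n k v) v = v"
proof (cases rule: Psi_cases[where v=v and k=k])
  case (1 j)
  have "j \<ge> 1" using 1 by auto
  then have "pc n k v = 0" using 1 unfolding pc_def by auto
  then show ?thesis by (simp add: Psi_zero)
next
  case 2
  then show ?thesis by (simp add: Psi_out)
qed

lemma Psi_fix:
  "Psi n k 1 a v = v \<longleftrightarrow> (\<forall>j\<in>{1..k}. \<bar>v 0 - 2 * real j\<bar> < 1 \<longrightarrow> tent j a * gam n v = 0)"
proof (cases rule: Psi_cases[where v=v and k=k])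
  case (1 j)
  have oth: "\<bar>v 0 - 2 * real i\<bar> < 1 \<longleftrightarrow> i = j" if "i \<in> {1..k}" for i
  proof
    assume "\<bar>v 0 - 2 * real i\<bar> < 1"
    then have "\<bar>real i - real j\<bar> < 1" using 1 by linarith
    then show "i = j" by linarith
  qed (use 1 in simp)
  have tb: "\<bar>tent j a * gam n v\<bar> \<le> 1/2" using tg_bd[of 1 j a n v] by simp
  have "Psi n k 1 a v = v \<longleftrightarrow> 2 * real j + rho (tent j a * gam n v) (v 0 - 2 * real j) = v 0"
    using Psi_in[where v=v and n=n and e=1 and a=a, OF 1] clip_id[OF tb] by (auto simp: fun_eq_iff)
  also have "\<dots> \<longleftrightarrow> rho (tent j a * gam n v) (v 0 - 2 * real j) = v 0 - 2 * real j" by auto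
  also have "\<dots> \<longleftrightarrow> tent j a * gam n v = 0" using rho_fix[OF 1(2) tb] .
  finally show ?thesis using oth 1 by auto
next
  case 2
  then show ?thesis by (auto simp: Psi_out not_less)
qed



definition Kc :: "nat \<Rightarrow> real \<Rightarrow> (nat \<Rightarrow> real) set" where
  "Kc n R = {v. (\<forall>i<n. \<bar>v i\<bar> \<le> R) \<and> (\<forall>i\<ge>n. v i = 0)}"

lemma compact_Kc: "compactin (Euclidean_space n) (Kc n R)"
proof -
  let ?S = "\<lambda>i. if i < n then {-R..R} else {0::real}"
  have eq: "Kc n R = PiE UNIV ?S"
  proof (intro set_eqI iffI)
    fix v assume "v \<in> Kc n R"
    then have "v i \<in> ?S i" for i unfolding Kc_def by (cases "i < n") (auto simp: abs_le_iff)
    then show "v \<in> PiE UNIV ?S" by (simp add: PiE_UNIV_domain)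
  next
    fix v assume "v \<in> PiE UNIV ?S"
    then have vi: "v i \<in> ?S i" for i by (simp add: PiE_UNIV_domain Pi_iff)
    have "(\<forall>i<n. \<bar>v i\<bar> \<le> R) \<and> (\<forall>i\<ge>n. v i = 0)"
    proof (intro conjI allI impI)
      fix i assume "i < n" then show "\<bar>v i\<bar> \<le> R" using vi[of i] by (simp add: abs_le_iff)
    next
      fix i assume "n \<le> i" then show "v i = 0" using vi[of i] by simp
    qed
    then show "v \<in> Kc n R" unfolding Kc_def by simp
  qed
  have c: "compactin euclideanreal (?S i)" for i by (cases "i < n") auto
  have "compactin (powertop_real UNIV) (Kc n R)"
    unfolding eq compactin_PiE using c by blast
  moreover have "Kc n R \<subseteq> {x. \<forall>i\<ge>n. x i = 0}" unfolding Kc_def by auto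
  ultimately show ?thesis unfolding Euclidean_space_def compactin_subtopology by auto
qed

lemma cont_coord: "continuous_map Z (Euclidean_space n) F \<Longrightarrow> continuous_map Z euclideanreal (\<lambda>z. F z i)"
proof -
  assume F: "continuous_map Z (Euclidean_space n) F"
  have "continuous_map (Euclidean_space n) euclideanreal (\<lambda>v. v i)"
    unfolding Euclidean_space_def
    by (rule continuous_map_from_subtopology[OF continuous_map_product_projection]) simp
  from continuous_map_compose[OF F this] show ?thesis by (simp add: o_def)
qed

lemma cont_gam: "continuous_map Z (Euclidean_space m) F \<Longrightarrow> continuous_map Z euclideanreal (\<lambda>z. gam n (F z))"
  unfolding gam_def by (intro continuous_intros cont_coord) auto

lemma cont_tent [continuous_intros]: "continuous_map Z euclideanreal a \<Longrightarrow> continuous_map Z euclideanreal (\<lambda>z. tent j (a z))"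
  unfolding tent_def by (intro continuous_intros) auto

lemma cont_pc: "continuous_map (Euclidean_space n) euclideanreal (pc n k)"
proof -
  have "continuous_map (Euclidean_space n) euclideanreal (\<lambda>v. real k * max 0 (1 - \<bar>v 0 + 2\<bar>) * gam n v)"
  proof -
    have c0: "continuous_map (Euclidean_space n) euclideanreal (\<lambda>x. x i)" for i
      using cont_coord[of "Euclidean_space n" n "\<lambda>x. x"] by simp
    have cg: "continuous_map (Euclidean_space n) euclideanreal (gam n)"
      using cont_gam[of "Euclidean_space n" n "\<lambda>x. x" n] by simp
    show ?thesis by (intro continuous_intros c0 cg) auto
  qed
  then show ?thesis unfolding pc_def[abs_def] .
qed

lemma Psi_E: "1 \<le> n \<Longrightarrow> v \<in> topspace (Euclidean_space n) \<Longrightarrow> Psi n k e a v \<in> topspace (Euclidean_space n)"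
  unfolding topspace_Euclidean_space Psi_def by auto

lemma cont_Psi:
  assumes n: "1 \<le> n"
  shows "continuous_map (prod_topology euclideanreal (Euclidean_space n)) (Euclidean_space n)
           (\<lambda>z. Psi n k e (fst z) (snd z))"
proof -
  let ?Z = "prod_topology euclideanreal (Euclidean_space n)"
  have sn: "continuous_map ?Z (Euclidean_space n) snd" by (rule continuous_map_snd)
  have fs: "continuous_map ?Z euclideanreal fst" by (rule continuous_map_fst)
  have ci: "continuous_map ?Z euclideanreal (\<lambda>z. Psi n k e (fst z) (snd z) i)" for i
  proof (cases "i = 0")
    case True
    have "continuous_map ?Z euclideanreal (\<lambda>z. snd z 0 + Ssum n k e (fst z) (snd z))"
      unfolding Ssum_def
      by (intro continuous_intros cont_coord[OF sn] cont_gam[OF sn] fs) auto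
    then show ?thesis using True unfolding Psi_def by simp
  next
    case False
    then show ?thesis unfolding Psi_def using cont_coord[OF sn, of i] by simp
  qed
  have "continuous_map ?Z (powertop_real UNIV) (\<lambda>z. Psi n k e (fst z) (snd z))"
    unfolding continuous_map_componentwise_UNIV using ci by simp
  moreover have "(\<lambda>z. Psi n k e (fst z) (snd z)) ` topspace ?Z \<subseteq> {x. \<forall>i\<ge>n. x i = 0}"
    using Psi_E[OF n] by (force simp: topspace_Euclidean_space)
  ultimately show ?thesis unfolding Euclidean_space_def continuous_map_in_subtopology by (simp add: image_subset_iff_funcset)
qed

lemma Psi_Kc:
  assumes n: "1 \<le> n" and v: "v \<in> Kc n (2 * real k + 2)"
  shows "Psi n k e a v \<in> Kc n (2 * real k + 2)"
proof (cases rule: Psi_cases[where v=v and k=k])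
  case (1 j)
  have s: "\<bar>Psi n k e a v 0 - 2 * real j\<bar> < 1" by (rule Psi_stay[where v=v, OF 1])
  have "real j \<le> real k" using 1 by auto
  then have "\<bar>Psi n k e a v 0\<bar> \<le> 2 * real k + 2" using s 1 by auto
  then show ?thesis using v n unfolding Kc_def
    by (auto simp: Psi_other) (metis Psi_other less_one not_le)
next
  case 2
  then show ?thesis using v by (simp add: Psi_out)
qed

lemma Psi_outside:
  assumes k: "1 \<le> k" and v: "v \<in> topspace (Euclidean_space n)" and nv: "v \<notin> Kc n (2 * real k + 2)"
  shows "Psi n k e a v = v \<and> pc n k v = 0"
proof -
  obtain i where i: "i < n" "\<bar>v i\<bar> > 2 * real k + 2"
    using v nv unfolding Kc_def topspace_Euclidean_space by force
  have kk: "real k \<ge> 1" using k by simp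
  show ?thesis
  proof (cases "i = 0")
    case True
    have "\<forall>j\<in>{1..k}. \<bar>v 0 - 2 * real j\<bar> \<ge> 1"
    proof
      fix j assume "j \<in> {1..k}"
      then have "real j \<le> real k" "real j \<ge> 1" by auto
      then show "\<bar>v 0 - 2 * real j\<bar> \<ge> 1" using i True by auto
    qed
    moreover have "max 0 (1 - \<bar>v 0 + 2\<bar>) = 0" using i True kk by auto
    ultimately show ?thesis by (simp add: Psi_out pc_def)
  next
    case False
    then have g: "gam n v = 0" using i kk by (intro gam_zero_if[of i]) auto
    then have "Ssum n k e a v = 0" unfolding Ssum_def by (simp add: Dm_zero)
    then show ?thesis using g unfolding Psi_def pc_def by simp
  qed
qed



definition FixS :: "'a topology \<Rightarrow> ('a \<Rightarrow> 'a \<Rightarrow> 'a) \<Rightarrow> 'a \<Rightarrow> 'a set" where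
  "FixS X f y = {x \<in> topspace X. f x y = x}"
definition FS :: "'a topology \<Rightarrow> ('a \<Rightarrow> 'a \<Rightarrow> 'a) \<Rightarrow> 'a set set" where
  "FS X f = FixS X f ` topspace X"

lemma FS_iso:
  assumes q1: "topological_quandle X f1" and iso: "quandle_isomorphic X f1 f2"
  shows "card (FS X f1) = card (FS X f2)"
proof -
  let ?S = "topspace X"
  obtain \<phi> where hp: "homeomorphic_map X X \<phi>"
    and eq: "\<And>x y. x \<in> ?S \<Longrightarrow> y \<in> ?S \<Longrightarrow> \<phi> (f1 x y) = f2 (\<phi> x) (\<phi> y)"
    using iso unfolding quandle_isomorphic_def by blast
  have im: "\<phi> ` ?S = ?S" by (rule homeomorphic_imp_surjective_map[OF hp])
  have inj: "inj_on \<phi> ?S" by (rule homeomorphic_imp_injective_map[OF hp])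
  have cl: "f1 x y \<in> ?S" if "x \<in> ?S" "y \<in> ?S" for x y
  proof -
    have "homeomorphic_map X X (\<lambda>x. f1 x y)" using q1 that unfolding topological_quandle_def by blast
    from homeomorphic_imp_surjective_map[OF this] that show ?thesis by blast
  qed
  have fx: "FixS X f2 (\<phi> y) = \<phi> ` FixS X f1 y" if y: "y \<in> ?S" for y
  proof (intro set_eqI iffI)
    fix x' assume "x' \<in> FixS X f2 (\<phi> y)"
    then have x': "x' \<in> ?S" "f2 x' (\<phi> y) = x'" unfolding FixS_def by auto
    then obtain x where x: "x \<in> ?S" "x' = \<phi> x" using im by blast
    have "\<phi> (f1 x y) = \<phi> x" using eq[OF x(1) y] x x' by simp
    then have "f1 x y = x" using inj cl[OF x(1) y] x(1) by (auto dest: inj_onD)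
    then show "x' \<in> \<phi> ` FixS X f1 y" using x unfolding FixS_def by auto
  next
    fix x' assume "x' \<in> \<phi> ` FixS X f1 y"
    then obtain x where x: "x \<in> ?S" "f1 x y = x" "x' = \<phi> x" unfolding FixS_def by auto
    have "f2 x' (\<phi> y) = x'" using eq[OF x(1) y] x by simp
    moreover have "x' \<in> ?S" using x im by blast
    ultimately show "x' \<in> FixS X f2 (\<phi> y)" unfolding FixS_def by simp
  qed
  have "FS X f2 = (\<lambda>y. FixS X f2 (\<phi> y)) ` ?S"
    unfolding FS_def using im by (metis image_image)
  also have "\<dots> = (image \<phi>) ` FS X f1"
    unfolding FS_def image_image using fx by (intro image_cong) auto
  finally have e: "FS X f2 = (image \<phi>) ` FS X f1" .
  have "inj_on (image \<phi>) (FS X f1)"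
  proof (rule inj_onI)
    fix A B assume "A \<in> FS X f1" "B \<in> FS X f1" "\<phi> ` A = \<phi> ` B"
    moreover have "A \<subseteq> ?S" "B \<subseteq> ?S" using calculation unfolding FS_def FixS_def by auto
    ultimately show "A = B" using inj inj_on_image_eq_iff by metis
  qed
  then show ?thesis unfolding e by (simp add: card_image)
qed

lemma paste2:
  assumes A: "openin X A" and B: "openin X B" and cov: "topspace X \<subseteq> A \<union> B"
    and fa: "continuous_map (subtopology X A) Y fa" and fb: "continuous_map (subtopology X B) Y fb"
    and agree: "\<And>x. x \<in> topspace X \<Longrightarrow> x \<in> A \<Longrightarrow> x \<in> B \<Longrightarrow> fa x = fb x"
    and g: "\<And>x. x \<in> topspace X \<Longrightarrow> g x = (if x \<in> A then fa x else fb x)"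
  shows "continuous_map X Y g"
proof (rule pasting_lemma[where I="{True, False}" and T="\<lambda>b. if b then A else B" and f="\<lambda>b. if b then fa else fb"])
  show "openin X (if i then A else B)" if "i \<in> {True, False}" for i using A B by simp
  show "continuous_map (subtopology X (if i then A else B)) Y (if i then fa else fb)" if "i \<in> {True, False}" for i
    using fa fb by simp
  show "(if i then fa else fb) x = (if j then fa else fb) x"
    if "i \<in> {True, False}" "j \<in> {True, False}" "x \<in> topspace X \<inter> (if i then A else B) \<inter> (if j then A else B)" for i j x
    using that agree by (auto split: if_splits)
  show "\<exists>j. j \<in> {True, False} \<and> x \<in> (if j then A else B) \<and> g x = (if j then fa else fb) x" if "x \<in> topspace X" for x
    using that cov g by (cases "x \<in> A") auto
qed



locale qchart =
  fixes X :: "'a topology" and U :: "'a set" and V :: "(nat \<Rightarrow> real) set"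
    and h :: "'a \<Rightarrow> (nat \<Rightarrow> real)" and g :: "(nat \<Rightarrow> real) \<Rightarrow> 'a" and n k :: nat
  assumes hom: "homeomorphic_maps (subtopology X U) (subtopology (Euclidean_space n) V) h g"
    and U: "openin X U" and H: "Hausdorff_space X" and n: "1 \<le> n" and k: "1 \<le> k"
    and box: "Kc n (2 * real k + 2) \<subseteq> V"
begin

definition "V' = topspace (Euclidean_space n) \<inter> V"
definition "C = g ` Kc n (2 * real k + 2)"
definition "p y = (if y \<in> U then pc n k (h y) else 0)"
definition "F e x y = (if x \<in> U then g (Psi n k e (p y) (h x)) else x)"

lemma US: "U \<subseteq> topspace X" using U by (rule openin_subset)

lemma hcont: "continuous_map (subtopology X U) (subtopology (Euclidean_space n) V) h"
  and gcont: "continuous_map (subtopology (Euclidean_space n) V) (subtopology X U) g"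
  using hom unfolding homeomorphic_maps_def by auto

lemma hx: "x \<in> U \<Longrightarrow> h x \<in> V'"
  using hcont US unfolding continuous_map_def V'_def by auto
lemma gw: "w \<in> V' \<Longrightarrow> g w \<in> U"
  using gcont unfolding continuous_map_def V'_def by auto
lemma ghx: "x \<in> U \<Longrightarrow> g (h x) = x"
  using hom US unfolding homeomorphic_maps_def by auto
lemma hgw: "w \<in> V' \<Longrightarrow> h (g w) = w"
  using hom unfolding homeomorphic_maps_def V'_def by auto

lemma KV: "Kc n (2 * real k + 2) \<subseteq> V'"
  using box unfolding V'_def Kc_def topspace_Euclidean_space by auto

lemma PsiV: "w \<in> V' \<Longrightarrow> Psi n k e a w \<in> V'"
proof -
  assume w: "w \<in> V'"
  show ?thesis
  proof (cases "w \<in> Kc n (2 * real k + 2)")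
    case True
    then show ?thesis using Psi_Kc[OF n True] KV by auto
  next
    case False
    then show ?thesis using Psi_outside[OF k _ False] w unfolding V'_def by auto
  qed
qed

lemma CU: "C \<subseteq> U" unfolding C_def using KV gw by auto

lemma Cclosed: "closedin X C"
proof -
  have "compactin (subtopology (Euclidean_space n) V) (Kc n (2 * real k + 2))"
    using compact_Kc box by (simp add: compactin_subtopology)
  from image_compactin[OF this gcont] have "compactin (subtopology X U) C" unfolding C_def .
  then have "compactin X C" by (simp add: compactin_subtopology)
  then show ?thesis by (rule compactin_imp_closedin[OF H])
qed

lemma supp: "x \<in> U \<Longrightarrow> x \<notin> C \<Longrightarrow> Psi n k e a (h x) = h x \<and> pc n k (h x) = 0"
proof -
  assume x: "x \<in> U" "x \<notin> C"
  have "h x \<notin> Kc n (2 * real k + 2)"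
    using x ghx[OF x(1)] unfolding C_def by (metis image_eqI)
  moreover have "h x \<in> topspace (Euclidean_space n)" using hx[OF x(1)] unfolding V'_def by auto
  ultimately show ?thesis using Psi_outside[OF k] by blast
qed

lemma hcont': "continuous_map (subtopology X U) (Euclidean_space n) h"
  using hcont by (rule continuous_map_into_fulltopology)

lemma gcont': "continuous_map (subtopology (Euclidean_space n) V) X g"
  using gcont by (rule continuous_map_into_fulltopology)

lemma openXC: "openin X (topspace X - C)"
  using Cclosed by (simp add: openin_diff)

lemma p_cont: "continuous_map X euclideanreal p"
proof (rule paste2[where fa="\<lambda>y. pc n k (h y)" and fb="\<lambda>y. 0", OF U openXC])
  show "topspace X \<subseteq> U \<union> (topspace X - C)" using CU by auto
  show "continuous_map (subtopology X U) euclideanreal (\<lambda>y. pc n k (h y))"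
    using continuous_map_compose[OF hcont' cont_pc] by (simp add: o_def)
  show "continuous_map (subtopology X (topspace X - C)) euclideanreal (\<lambda>y. 0)" by simp
  show "pc n k (h x) = 0" if "x \<in> topspace X" "x \<in> U" "x \<in> topspace X - C" for x
    using supp that by blast
  show "p x = (if x \<in> U then pc n k (h x) else 0)" for x unfolding p_def by simp
qed

lemma Psi_cont': "continuous_map (prod_topology euclideanreal (subtopology (Euclidean_space n) V))
    (subtopology (Euclidean_space n) V) (\<lambda>z. Psi n k e (fst z) (snd z))"
proof -
  have "continuous_map (prod_topology euclideanreal (subtopology (Euclidean_space n) V))
    (Euclidean_space n) (\<lambda>z. Psi n k e (fst z) (snd z))"
    unfolding prod_topology_subtopology by (rule continuous_map_from_subtopology[OF cont_Psi[OF n]])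
  moreover have "Psi n k e (fst z) (snd z) \<in> V" if "z \<in> topspace (prod_topology euclideanreal (subtopology (Euclidean_space n) V))" for z
    using that PsiV[of "snd z" e "fst z"] unfolding V'_def by auto
  ultimately show ?thesis by (auto simp: continuous_map_in_subtopology)
qed

lemma F_cont: "continuous_map (prod_topology X X) X (\<lambda>(x, y). F e x y)"
proof (rule paste2[where A="U \<times> topspace X" and B="(topspace X - C) \<times> topspace X"
      and fa="\<lambda>z. g (Psi n k e (p (snd z)) (h (fst z)))" and fb=fst])
  show "openin (prod_topology X X) (U \<times> topspace X)" using U by (simp add: openin_prod_Times_iff)
  show "openin (prod_topology X X) ((topspace X - C) \<times> topspace X)" using openXC by (simp add: openin_prod_Times_iff)
  show "topspace (prod_topology X X) \<subseteq> U \<times> topspace X \<union> (topspace X - C) \<times> topspace X" using CU by auto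
  let ?Z = "subtopology (prod_topology X X) (U \<times> topspace X)"
  have c1: "continuous_map ?Z euclideanreal (\<lambda>z. p (snd z))"
    using continuous_map_compose[OF continuous_map_subtopology_snd p_cont] by (simp add: o_def)
  have "continuous_map ?Z (subtopology X U) fst"
    by (auto simp: continuous_map_in_subtopology continuous_map_subtopology_fst)
  then have c2: "continuous_map ?Z (subtopology (Euclidean_space n) V) (\<lambda>z. h (fst z))"
    using continuous_map_compose[OF _ hcont] by (simp add: o_def)
  have "continuous_map ?Z (prod_topology euclideanreal (subtopology (Euclidean_space n) V)) (\<lambda>z. (p (snd z), h (fst z)))"
    using c1 c2 by (intro continuous_map_pairedI)
  from continuous_map_compose[OF continuous_map_compose[OF this Psi_cont'] gcont']
  show "continuous_map ?Z X (\<lambda>z. g (Psi n k e (p (snd z)) (h (fst z))))" by (simp add: o_def)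
  show "continuous_map (subtopology (prod_topology X X) ((topspace X - C) \<times> topspace X)) X fst"
    by (simp add: continuous_map_subtopology_fst)
  show "g (Psi n k e (p (snd z)) (h (fst z))) = fst z"
    if "z \<in> topspace (prod_topology X X)" "z \<in> U \<times> topspace X" "z \<in> (topspace X - C) \<times> topspace X" for z
    using that supp[of "fst z"] ghx by auto
  show "(case z of (x, y) \<Rightarrow> F e x y) = (if z \<in> U \<times> topspace X then g (Psi n k e (p (snd z)) (h (fst z))) else fst z)"
    if "z \<in> topspace (prod_topology X X)" for z
    using that unfolding F_def by (cases z) auto
qed

lemma F_in: "x \<in> topspace X \<Longrightarrow> F e x y \<in> topspace X"
  unfolding F_def using gw PsiV hx US by auto

lemma F_U: "x \<in> U \<Longrightarrow> h (F e x y) = Psi n k e (p y) (h x)"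
  unfolding F_def using hgw PsiV hx by auto

lemma F_inv: "F (- e) (F e x y) y = x"
proof (cases "x \<in> U")
  case True
  have "F e x y \<in> U" unfolding F_def using True gw PsiV hx by auto
  then have "F (- e) (F e x y) y = g (Psi n k (- e) (p y) (Psi n k e (p y) (h x)))"
    using F_U[OF True] unfolding F_def[of "-e"] by simp
  also have "\<dots> = x" by (simp add: Psi_inv ghx True)
  finally show ?thesis .
qed (simp add: F_def)

lemma p_F: "p (F e y z) = p y"
proof (cases "y \<in> U")
  case True
  have "F e y z \<in> U" unfolding F_def using True gw PsiV hx by auto
  then show ?thesis using True F_U[OF True] unfolding p_def by (simp add: pc_Psi)
qed (simp add: F_def)

lemma F_dist: "F e (F e x y) z = F e (F e x z) (F e y z)"
proof (cases "x \<in> U")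
  case True
  have a: "F e x y \<in> U" "F e x z \<in> U" unfolding F_def using True gw PsiV hx by auto
  have "F e (F e x y) z = g (Psi n k e (p z) (Psi n k e (p y) (h x)))"
    using a F_U[OF True] unfolding F_def[of e "F e x y"] by simp
  also have "\<dots> = g (Psi n k e (p y) (Psi n k e (p z) (h x)))" by (simp add: Psi_comm)
  also have "\<dots> = F e (F e x z) (F e y z)"
    using a F_U[OF True] p_F unfolding F_def[of e "F e x z"] by simp
  finally show ?thesis .
qed (simp add: F_def)

lemma F_idem: "F e x x = x"
  unfolding F_def p_def by (auto simp: Psi_idem ghx)

lemma F_quandle: "topological_quandle X (F 1)"
proof -
  have ce: "continuous_map X X (\<lambda>x. F e x y)" if y: "y \<in> topspace X" for e y
  proof -
    have "continuous_map X (prod_topology X X) (\<lambda>x. (x, y))"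
      using y by (intro continuous_map_pairedI) auto
    from continuous_map_compose[OF this F_cont[of e]] show ?thesis by (simp add: o_def)
  qed
  have hm: "homeomorphic_map X X (\<lambda>x. F 1 x y)" if y: "y \<in> topspace X" for y
  proof -
    have i1: "\<forall>x\<in>topspace X. F (-1) (F 1 x y) y = x" using F_inv[of 1] by simp
    have i2: "\<forall>x\<in>topspace X. F 1 (F (-1) x y) y = x" using F_inv[of "-1"] by simp
    have "homeomorphic_maps X X (\<lambda>x. F 1 x y) (\<lambda>x. F (-1) x y)"
      unfolding homeomorphic_maps_def using ce[OF y, of 1] ce[OF y, of "-1"] i1 i2 by blast
    then show ?thesis by (rule homeomorphic_maps_imp_map)
  qed
  show ?thesis unfolding topological_quandle_def
    using F_cont[of 1] hm F_dist[of 1] F_idem[of 1] by blast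
qed

end



lemma gam_axis: "gam n (\<lambda>i. if i = 0 then c else 0) = 1"
  unfolding gam_def by (intro prod.neutral) auto

lemma tent_unique: "tent i a \<noteq> 0 \<Longrightarrow> tent j a \<noteq> 0 \<Longrightarrow> i = j"
proof -
  assume "tent i a \<noteq> 0" "tent j a \<noteq> 0"
  then have "\<bar>a - real i\<bar> < 1/2" "\<bar>a - real j\<bar> < 1/2" unfolding tent_def by (auto simp: max_def split: if_splits)
  then have "\<bar>real i - real j\<bar> < 1" by linarith
  then show "i = j" by linarith
qed

context qchart
begin

definition "M j = {x \<in> U. \<bar>h x 0 - 2 * real j\<bar> < 1 \<and> gam n (h x) \<noteq> 0}"

lemma fix_char:
  assumes x: "x \<in> topspace X"
  shows "F 1 x y = x \<longleftrightarrow> (\<forall>j\<in>{1..k}. tent j (p y) \<noteq> 0 \<longrightarrow> x \<notin> M j)"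
proof (cases "x \<in> U")
  case True
  have "F 1 x y = x \<longleftrightarrow> Psi n k 1 (p y) (h x) = h x"
  proof
    assume "F 1 x y = x" then show "Psi n k 1 (p y) (h x) = h x" using F_U[OF True, of 1 y] by simp
  next
    assume "Psi n k 1 (p y) (h x) = h x" then show "F 1 x y = x" unfolding F_def using True ghx by simp
  qed
  also have "\<dots> \<longleftrightarrow> (\<forall>j\<in>{1..k}. \<bar>h x 0 - 2 * real j\<bar> < 1 \<longrightarrow> tent j (p y) * gam n (h x) = 0)"
    by (rule Psi_fix)
  also have "\<dots> \<longleftrightarrow> (\<forall>j\<in>{1..k}. tent j (p y) \<noteq> 0 \<longrightarrow> x \<notin> M j)"
    unfolding M_def using True by auto
  finally show ?thesis .
next
  case False
  then show ?thesis unfolding F_def M_def by simp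
qed

lemma FixS_all: "(\<forall>j\<in>{1..k}. tent j (p y) = 0) \<Longrightarrow> FixS X (F 1) y = topspace X"
  unfolding FixS_def using fix_char by auto

lemma FixS_j: "j \<in> {1..k} \<Longrightarrow> tent j (p y) \<noteq> 0 \<Longrightarrow> FixS X (F 1) y = topspace X - M j"
  unfolding FixS_def using fix_char tent_unique by (auto; blast)

lemma inKc: "\<bar>c\<bar> \<le> 2 * real k + 2 \<Longrightarrow> (\<lambda>i::nat. if i = 0 then c else 0) \<in> Kc n (2 * real k + 2)"
  unfolding Kc_def using n by auto

lemma pt: "\<bar>c\<bar> \<le> 2 * real k + 2 \<Longrightarrow> g (\<lambda>i. if i = 0 then c else 0) \<in> U \<and>
   h (g (\<lambda>i. if i = 0 then c else 0)) = (\<lambda>i. if i = 0 then c else 0)"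
  using inKc KV gw hgw by blast

lemma M_sub: "M j \<subseteq> topspace X" unfolding M_def using US by auto

lemma M_ne: "j \<in> {1..k} \<Longrightarrow> g (\<lambda>i. if i = 0 then 2 * real j else 0) \<in> M j"
proof -
  assume j: "j \<in> {1..k}"
  then have "\<bar>2 * real j\<bar> \<le> 2 * real k + 2" by auto
  from pt[OF this] show ?thesis unfolding M_def by (simp add: gam_axis)
qed

lemma M_disj: "x \<in> M i \<Longrightarrow> x \<in> M j \<Longrightarrow> i = j"
proof -
  assume "x \<in> M i" "x \<in> M j"
  then have "\<bar>h x 0 - 2 * real i\<bar> < 1" "\<bar>h x 0 - 2 * real j\<bar> < 1" unfolding M_def by auto
  then have "\<bar>real i - real j\<bar> < 1" by linarith
  then show "i = j" by linarith
qed

lemma FS_eq: "FS X (F 1) = insert (topspace X) ((\<lambda>j. topspace X - M j) ` {1..k})"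
proof (intro equalityI subsetI)
  fix A assume "A \<in> FS X (F 1)"
  then obtain y where y: "y \<in> topspace X" "A = FixS X (F 1) y" unfolding FS_def by auto
  show "A \<in> insert (topspace X) ((\<lambda>j. topspace X - M j) ` {1..k})"
  proof (cases "\<forall>j\<in>{1..k}. tent j (p y) = 0")
    case True then show ?thesis using y FixS_all by simp
  next
    case False
    then obtain j where "j \<in> {1..k}" "tent j (p y) \<noteq> 0" by auto
    then show ?thesis using y FixS_j by auto
  qed
next
  fix A assume A: "A \<in> insert (topspace X) ((\<lambda>j. topspace X - M j) ` {1..k})"
  show "A \<in> FS X (F 1)"
  proof (cases "A = topspace X")
    case True
    have "\<bar>0::real\<bar> \<le> 2 * real k + 2" by simp
    note P = pt[OF this]
    let ?y = "g (\<lambda>i. if i = 0 then 0 else 0)"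
    have "p ?y = 0" unfolding p_def pc_def using P by simp
    then have "FixS X (F 1) ?y = topspace X" using tent_zero by (intro FixS_all) auto
    moreover have "?y \<in> topspace X" using P US by auto
    ultimately show ?thesis using True unfolding FS_def by (metis image_eqI)
  next
    case False
    then obtain j where j: "j \<in> {1..k}" "A = topspace X - M j" using A by blast
    let ?c = "- 1 - real j / real k"
    have jk: "1 \<le> real j" "real j \<le> real k" using j by auto
    have kp: "real k > 0" using k by simp
    have q: "0 \<le> real j / real k" "real j / real k \<le> 1" using jk kp by auto
    have "\<bar>?c\<bar> \<le> 2 * real k + 2" using q jk by (subst abs_of_nonpos) linarith+
    note P = pt[OF this]
    let ?y = "g (\<lambda>i. if i = 0 then ?c else 0)"
    have "\<bar>?c + 2\<bar> = 1 - real j / real k" using q by auto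
    then have "p ?y = real k * (real j / real k)" unfolding p_def pc_def using P q by (simp add: gam_axis)
    also have "\<dots> = real j" using kp by simp
    finally have "tent j (p ?y) \<noteq> 0" unfolding tent_def by simp
    then have "FixS X (F 1) ?y = A" using FixS_j[OF j(1)] j(2) by simp
    moreover have "?y \<in> topspace X" using P US by auto
    ultimately show ?thesis unfolding FS_def by (metis image_eqI)
  qed
qed

lemma card_FS: "card (FS X (F 1)) = Suc k"
proof -
  have inj: "inj_on (\<lambda>j. topspace X - M j) {1..k}"
  proof (rule inj_onI)
    fix i j assume i: "i \<in> {1..k}" and j: "j \<in> {1..k}" and e: "topspace X - M i = topspace X - M j"
    have "M i = M j" using e M_sub[of i] M_sub[of j] by blast
    then show "i = j" using M_ne[OF i] M_disj by blast
  qed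
  have nin: "topspace X \<notin> (\<lambda>j. topspace X - M j) ` {1..k}"
  proof
    assume "topspace X \<in> (\<lambda>j. topspace X - M j) ` {1..k}"
    then obtain j where j: "j \<in> {1..k}" "topspace X = topspace X - M j" by auto
    then show False using M_ne[OF j(1)] M_sub[of j] by blast
  qed
  show ?thesis unfolding FS_eq using inj nin by (simp add: card_image)
qed

end



lemma fin_delta:
  fixes n :: nat and c :: "nat \<Rightarrow> real"
  assumes "\<And>i. i < n \<Longrightarrow> \<exists>d>0. \<forall>y. \<bar>y - c i\<bar> < d \<longrightarrow> y \<in> S i"
  shows "\<exists>d>0. \<forall>i<n. \<forall>y. \<bar>y - c i\<bar> < (d::real) \<longrightarrow> y \<in> S i"
  using assms
proof (induction n)
  case 0
  then show ?case by (intro exI[of _ 1]) auto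
next
  case (Suc n)
  obtain d1 where d1: "d1 > 0" "\<forall>i<n. \<forall>y. \<bar>y - c i\<bar> < d1 \<longrightarrow> y \<in> S i"
    using Suc.IH Suc.prems by (meson less_SucI)
  obtain d2 where d2: "d2 > 0" "\<forall>y. \<bar>y - c n\<bar> < d2 \<longrightarrow> y \<in> S n"
    using Suc.prems[of n] by blast
  show ?case
  proof (intro exI[of _ "min d1 d2"] conjI allI impI)
    show "min d1 d2 > 0" using d1 d2 by simp
    fix i y assume "i < Suc n" "\<bar>y - c i\<bar> < min d1 d2"
    then show "y \<in> S i" using d1 d2 by (cases "i = n") auto
  qed
qed

lemma box_lemma:
  assumes V: "openin (Euclidean_space n) V" and c: "c \<in> V"
  shows "\<exists>d>0. \<forall>v\<in>topspace (Euclidean_space n). (\<forall>i<n. \<bar>v i - c i\<bar> < d) \<longrightarrow> v \<in> V"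
proof -
  obtain W where W: "openin (powertop_real UNIV) W" "V = W \<inter> {x. \<forall>i\<ge>n. x i = 0}"
    using V unfolding Euclidean_space_def openin_subtopology by blast
  have cW: "c \<in> W" and c0: "\<forall>i\<ge>n. c i = 0" using c W by auto
  obtain Xs where Xs: "c \<in> PiE UNIV Xs" "\<And>i. openin euclideanreal (Xs i)" "PiE UNIV Xs \<subseteq> W"
    using product_topology_open_contains_basis[OF W(1) cW] by blast
  have "\<exists>d>0. \<forall>y. \<bar>y - c i\<bar> < d \<longrightarrow> y \<in> Xs i" for i
  proof -
    have "open (Xs i)" "c i \<in> Xs i" using Xs by (auto simp: PiE_UNIV_domain)
    then show ?thesis unfolding open_dist dist_real_def by blast
  qed
  then obtain d where d: "d > 0" "\<forall>i<n. \<forall>y. \<bar>y - c i\<bar> < d \<longrightarrow> y \<in> Xs i"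
    using fin_delta[of n c Xs] by blast
  show ?thesis
  proof (intro exI[of _ d] conjI ballI impI)
    fix v assume v: "v \<in> topspace (Euclidean_space n)" and b: "\<forall>i<n. \<bar>v i - c i\<bar> < d"
    have "v i \<in> Xs i" for i
    proof (cases "i < n")
      case True then show ?thesis using d b by blast
    next
      case False
      then have "v i = c i" using v c0 unfolding topspace_Euclidean_space by auto
      then show ?thesis using Xs(1) by (auto simp: PiE_UNIV_domain)
    qed
    then have "v \<in> W" using Xs(3) by (auto simp: PiE_UNIV_domain)
    then show "v \<in> V" using W v unfolding topspace_Euclidean_space by auto
  qed (use d in auto)
qed

lemma affine_cont:
  assumes c: "c \<in> topspace (Euclidean_space n)" and c0: "\<And>i. n \<le> i \<Longrightarrow> b i = 0"
  shows "continuous_map (Euclidean_space n) (Euclidean_space n) (\<lambda>v i. (v i - c i) * s + b i)"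
proof -
  have "continuous_map (Euclidean_space n) euclideanreal (\<lambda>v. (v i - c i) * s + b i)" for i
    using cont_coord[of "Euclidean_space n" n "\<lambda>x. x" i] by (intro continuous_intros) auto
  then have "continuous_map (Euclidean_space n) (powertop_real UNIV) (\<lambda>v i. (v i - c i) * s + b i)"
    unfolding continuous_map_componentwise_UNIV by simp
  moreover have "(\<lambda>v i. (v i - c i) * s + b i) ` topspace (Euclidean_space n) \<subseteq> {x. \<forall>i\<ge>n. x i = 0}"
    using c c0 unfolding topspace_Euclidean_space by auto
  ultimately show ?thesis unfolding Euclidean_space_def continuous_map_in_subtopology
    by (simp add: image_subset_iff_funcset)
qed

lemma normalize_chart:
  assumes hom: "homeomorphic_maps (subtopology X U) (subtopology (Euclidean_space n) V) h g"
    and V: "openin (Euclidean_space n) V" and x0: "x0 \<in> U" and U: "openin X U" and R: "R > 0"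
  shows "\<exists>V' h' g'. homeomorphic_maps (subtopology X U) (subtopology (Euclidean_space n) V') h' g'
            \<and> Kc n R \<subseteq> V'"
proof -
  let ?E = "Euclidean_space n"
  have VE: "V \<subseteq> topspace ?E" using V by (rule openin_subset)
  have "h x0 \<in> topspace (subtopology ?E V)"
    using hom x0 openin_subset[OF U] unfolding homeomorphic_maps_def continuous_map_def by auto
  then have cV: "h x0 \<in> V" by simp
  define c where "c = h x0"
  have cE: "c \<in> topspace ?E" using cV VE c_def by auto
  then have c0: "c i = 0" if "n \<le> i" for i using that unfolding topspace_Euclidean_space by auto
  obtain d where d: "d > 0" "\<forall>v\<in>topspace ?E. (\<forall>i<n. \<bar>v i - c i\<bar> < d) \<longrightarrow> v \<in> V"
    using box_lemma[OF V cV] c_def by blast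
  define s where "s = 2 * R / d"
  have s: "s > 0" using R d unfolding s_def by simp
  define A where "A = (\<lambda>v i. (v i - c i) * s + (0::real))"
  define B where "B = (\<lambda>w i. (w i - 0) * (1 / s) + c i)"
  have z: "(\<lambda>i::nat. 0::real) \<in> topspace ?E" unfolding topspace_Euclidean_space by simp
  have hAB: "homeomorphic_maps ?E ?E A B"
    unfolding homeomorphic_maps_def
  proof (intro conjI ballI)
    show "continuous_map ?E ?E A" unfolding A_def by (rule affine_cont[OF cE]) simp
    show "continuous_map ?E ?E B" unfolding B_def
      using affine_cont[OF z, of c "1/s"] c0 by simp
    show "B (A x) = x" for x unfolding A_def B_def using s by auto
    show "A (B x) = x" for x unfolding A_def B_def using s by auto
  qed
  have AE: "A ` V \<subseteq> topspace ?E" using hAB VE unfolding homeomorphic_maps_def continuous_map_def by auto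
  have "homeomorphic_maps (subtopology ?E V) (subtopology ?E (A ` V)) A B"
    by (rule homeomorphic_maps_subtopologies[OF hAB]) (use VE AE in auto)
  then have H: "homeomorphic_maps (subtopology X U) (subtopology ?E (A ` V)) (A \<circ> h) (g \<circ> B)"
    using hom homeomorphic_maps_compose by blast
  have "Kc n R \<subseteq> A ` V"
  proof
    fix w assume w: "w \<in> Kc n R"
    have wE: "w \<in> topspace ?E" using w unfolding Kc_def topspace_Euclidean_space by auto
    have BE: "B w \<in> topspace ?E" using hAB wE unfolding homeomorphic_maps_def continuous_map_def by auto
    have "\<bar>B w i - c i\<bar> < d" if "i < n" for i
    proof -
      have "\<bar>B w i - c i\<bar> = \<bar>w i\<bar> / s" unfolding B_def using s by (simp add: abs_div)
      also have "\<dots> \<le> R / s" using w that s unfolding Kc_def by (simp add: divide_right_mono)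
      also have "\<dots> = d / 2" unfolding s_def using R d by simp
      also have "\<dots> < d" using d by simp
      finally show ?thesis .
    qed
    then have "B w \<in> V" using d BE by blast
    moreover have "A (B w) = w" unfolding A_def B_def using s by auto
    ultimately show "w \<in> A ` V" by (metis image_eqI)
  qed
  with H show ?thesis by blast
qed

lemma exists_k:
  assumes man: "topological_manifold X n" and n: "n \<ge> 1" and ne: "topspace X \<noteq> {}" and k: "k \<ge> 1"
  shows "\<exists>f. topological_quandle X f \<and> card (FS X f) = Suc k"
proof -
  obtain x0 where x0: "x0 \<in> topspace X" using ne by blast
  obtain U V where UV: "openin X U" "x0 \<in> U" "openin (Euclidean_space n) V"
    "subtopology X U homeomorphic_space subtopology (Euclidean_space n) V"
    using man x0 unfolding topological_manifold_def by blast
  obtain h g where hg: "homeomorphic_maps (subtopology X U) (subtopology (Euclidean_space n) V) h g"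
    using UV(4) unfolding homeomorphic_space_def by blast
  obtain V' h' g' where N: "homeomorphic_maps (subtopology X U) (subtopology (Euclidean_space n) V') h' g'"
    "Kc n (2 * real k + 2) \<subseteq> V'"
    using normalize_chart[OF hg UV(3) UV(2) UV(1), of "2 * real k + 2"] by auto
  have H: "Hausdorff_space X" using man unfolding topological_manifold_def by blast
  interpret qchart X U V' h' g' n k
    using N UV(1) H n k by unfold_locales auto
  show ?thesis using F_quandle card_FS by blast
qed



theorem mainTheorem3:
  fixes X :: "'a topology" and n :: nat
  assumes "topological_manifold X n" and "n \<ge> 1" and "topspace X \<noteq> {}"
  shows "\<exists>Q. infinite Q \<and>
           (\<forall>f\<in>Q. topological_quandle X f \<and> \<not> trivial_quandle X f) \<and>
           (\<forall>f\<in>Q. \<forall>g\<in>Q. f \<noteq> g \<longrightarrow> \<not> quandle_isomorphic X f g)"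
proof -
  define G where "G = (\<lambda>m::nat. SOME f. topological_quandle X f \<and> card (FS X f) = Suc (Suc m))"
  have G: "topological_quandle X (G m) \<and> card (FS X (G m)) = Suc (Suc m)" for m
  proof -
    have "\<exists>f. topological_quandle X f \<and> card (FS X f) = Suc (Suc m)"
      using exists_k[OF assms, of "Suc m"] by simp
    then show ?thesis unfolding G_def by (rule someI_ex)
  qed
  have inj: "inj G"
  proof (rule injI)
    fix a b assume "G a = G b"
    then have "card (FS X (G a)) = card (FS X (G b))" by simp
    then show "a = b" using G[of a] G[of b] by simp
  qed
  have ntriv: "\<not> trivial_quandle X (G m)" for m
  proof
    assume t: "trivial_quandle X (G m)"
    have "FS X (G m) \<subseteq> {topspace X}"
      using t unfolding FS_def FixS_def trivial_quandle_def by auto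
    then have "card (FS X (G m)) \<le> card {topspace X}"
      by (intro card_mono) auto
    then have "card (FS X (G m)) \<le> 1" by simp
    then show False using G[of m] by simp
  qed
  have c1: "infinite (range G)" using inj finite_imageD[of G UNIV] by auto
  have c2: "\<forall>f\<in>range G. topological_quandle X f \<and> \<not> trivial_quandle X f" using G ntriv by auto
  have c3: "\<forall>f\<in>range G. \<forall>g\<in>range G. f \<noteq> g \<longrightarrow> \<not> quandle_isomorphic X f g"
  proof (intro ballI impI)
    fix f g assume f: "f \<in> range G" and g: "g \<in> range G" and fg: "f \<noteq> g"
    obtain a b where ab: "f = G a" "g = G b" using f g by auto
    show "\<not> quandle_isomorphic X f g"
    proof
      assume "quandle_isomorphic X f g"
      then have "card (FS X f) = card (FS X g)" using FS_iso G ab by blast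
      then have "a = b" using G[of a] G[of b] ab by simp
      then show False using fg ab by simp
    qed
  qed
  show ?thesis using c1 c2 c3 by blast
qed


end
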